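(* Assume the setup and monomial order in the context, with $b_{v;j,i}=\sum_{s=1}^n v_{j,r(s)}v^\dagger_{s,r(i)}-\delta_{j,i}1$. Every overlap ambiguity $(g_1,g_2,b_1,b_2)$ of $R$ with respect to $\le$ (i.e. $g_1,g_2\in R$ nonzero, $b_1,b_2$ monomials with $(b_1,b_2)\ne(1,1)$, $\mathrm{tip}(g_1)\,b_2=b_1\,\mathrm{tip}(g_2)$, $\mathrm{tip}(g_2)$ does not divide $b_2$ and $\mathrm{tip}(g_1)$ does not divide $b_1$) is of the form $$(b_{v^\dagger;\ell,1},\ b_{v;1,i},\ v^\dagger_{\ell,n},\ v^\dagger_{1,r(i)})$$ for some $v\in M$ and $(\ell,i)\in[n]^2$. Moreover every overlap ambiguity resolves, i.e. there are reductions $\varphi_1,\varphi_2$ by $R$ with $\varphi_1((\mathrm{tip}(g_1)-g_1/\lambda_1)b_2)=\varphi_2(b_1(\mathrm{tip}(g_2)-g_2/\lambda_2))$, $\lambda_m$ the coefficient of $\mathrm{tip}(g_m)$ in $g_m$.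
   Context: Let $k$ be a field and $n\ge 2$ an integer; write $[n]=\{1,\dots,n\}$ and $r(i)=n+1-i$. Let $X=\{u_{j,i},u^*_{j,i}:(j,i)\in[n]^2\}$ be a set of $2n^2$ distinct symbols and let $*$ be the involution of $X$ exchanging $u_{j,i}$ and $u^*_{j,i}$. Let $k\langle X\rangle$ be the free unital $k$-algebra on $X$. For an $n\times n$ matrix $v=(v_{j,i})$ with entries in $X$ define $n\times n$ matrices $v^t,v^\star,v^\dagger$ with entries in $X$ by $v^t_{j,i}=v_{i,j}$, $v^\star_{j,i}=(v_{r(j),r(i)})^*$, $v^\dagger_{j,i}=(v_{r(i),r(j)})^*$. Let $u=(u_{j,i})$ and $M=\{u,u^t,u^\star,u^\dagger\}$, and $R=\{\sum_{s=1}^n v_{j,r(s)}v^\dagger_{s,r(i)}-\delta_{j,i}1: v\in M,(j,i)\in[n]^2\}$. Monomial order: let $\le$ be the total order on $X$ with $u^*_{t,s}<u_{j,i}$ for all indices, $u_{t,s}<u_{j,i}$ iff $(t,s)<(j,i)$ lexicographically, and $u^*_{t,s}<u^*_{j,i}$ iff $(j,i)<(t,s)$ lexicographically; extend degree-lexicographically to monomials. $\mathrm{tip}(p)$ is the $\le$-largest monomial with nonzero coefficient in $p\ne0$. A one-step reduction by $0\ne p$ is a linear endomorphism of $k\langle X\rangle$ which, for some fixed monomials $a,c$, sends $a\,\mathrm{tip}(p)\,c$ to $a(\mathrm{tip}(p)-p/\lambda_p)c$ ($\lambda_p$ the coefficient of $\mathrm{tip}(p)$ in $p$) and fixes all other monomials;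 a reduction by $R$ is a finite composite of one-step reductions by nonzero elements of $R$. *)

theory Defs
  imports Main "HOL-Library.Poly_Mapping"
begin

text \<open>Symbols: U j i stands for u_{j,i}, S j i stands for u*_{j,i}.\<close>
datatype sym = U nat nat | S nat nat

definition Xset :: "nat \<Rightarrow> sym set" where
  "Xset n = {U j i | j i. j \<in> {1..n} \<and> i \<in> {1..n}} \<union> {S j i | j i. j \<in> {1..n} \<and> i \<in> {1..n}}"

fun sstar :: "sym \<Rightarrow> sym" where
  "sstar (U j i) = S j i"
| "sstar (S j i) = U j i"

definition rr :: "nat \<Rightarrow> nat \<Rightarrow> nat" where
  "rr n i = n + 1 - i"

text \<open>Matrices with entries in X are functions of (row, column).\<close>
type_synonym smat = "nat \<Rightarrow> nat \<Rightarrow> sym"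

definition umat :: smat where "umat = (\<lambda>j i. U j i)"
definition mtr :: "smat \<Rightarrow> smat" where "mtr v = (\<lambda>j i. v i j)"
definition mstar :: "nat \<Rightarrow> smat \<Rightarrow> smat" where
  "mstar n v = (\<lambda>j i. sstar (v (rr n j) (rr n i)))"
definition mdag :: "nat \<Rightarrow> smat \<Rightarrow> smat" where
  "mdag n v = (\<lambda>j i. sstar (v (rr n i) (rr n j)))"

definition Mset :: "nat \<Rightarrow> smat set" where
  "Mset n = {umat, mtr umat, mstar n umat, mdag n umat}"

text \<open>Free unital algebra k<X>: finitely supported functions on words.\<close>
type_synonym 'k fa = "sym list \<Rightarrow>\<^sub>0 'k"

definition mon :: "sym list \<Rightarrow> 'k::field fa" where
  "mon w = Poly_Mapping.single w 1"

definition fmul :: "'k::field fa \<Rightarrow> 'k fa \<Rightarrow> 'k fa" where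
  "fmul f g = (\<Sum>x\<in>Poly_Mapping.keys f. \<Sum>y\<in>Poly_Mapping.keys g. Poly_Mapping.single (x @ y) (Poly_Mapping.lookup f x * Poly_Mapping.lookup g y))"

definition smul :: "'k::field \<Rightarrow> 'k fa \<Rightarrow> 'k fa" where
  "smul c f = Poly_Mapping.map (\<lambda>x. c * x) f"

definition bgen :: "nat \<Rightarrow> smat \<Rightarrow> nat \<Rightarrow> nat \<Rightarrow> 'k::field fa" where
  "bgen n v j i = (\<Sum>s\<in>{1..n}. mon [v j (rr n s), mdag n v s (rr n i)])
                   - (if j = i then mon [] else 0)"

definition Rset :: "nat \<Rightarrow> 'k::field fa set" where
  "Rset n = {bgen n v j i | v j i. v \<in> Mset n \<and> j \<in> {1..n} \<and> i \<in> {1..n}}"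

fun sym_less :: "sym \<Rightarrow> sym \<Rightarrow> bool" where
  "sym_less (S t s) (U j i) = True"
| "sym_less (U t s) (S j i) = False"
| "sym_less (U t s) (U j i) = (t < j \<or> (t = j \<and> s < i))"
| "sym_less (S t s) (S j i) = (j < t \<or> (j = t \<and> i < s))"

definition mon_less :: "sym list \<Rightarrow> sym list \<Rightarrow> bool" where
  "mon_less a b \<longleftrightarrow> length a < length b \<or>
     (length a = length b \<and> (a, b) \<in> lexord {(x, y). sym_less x y})"

definition tip :: "'k::field fa \<Rightarrow> sym list" where
  "tip p = (THE m. m \<in> Poly_Mapping.keys p \<and> (\<forall>m'\<in>Poly_Mapping.keys p. m' = m \<or> mon_less m' m))"

definition lcoef :: "'k::field fa \<Rightarrow> 'k" where
  "lcoef p = Poly_Mapping.lookup p (tip p)"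

text \<open>One-step reduction by p at (a, c): the linear map sending the monomial
  a tip(p) c to a (tip(p) - p/lambda_p) c and fixing all other monomials.\<close>
definition red1 :: "'k::field fa \<Rightarrow> sym list \<Rightarrow> sym list \<Rightarrow> 'k fa \<Rightarrow> 'k fa" where
  "red1 p a c f = f - smul (Poly_Mapping.lookup f (a @ tip p @ c) / lcoef p) (fmul (fmul (mon a) p) (mon c))"

inductive reduction :: "nat \<Rightarrow> ('k::field fa \<Rightarrow> 'k fa) \<Rightarrow> bool" for n where
  red_id: "reduction n id"
| red_step: "reduction n \<phi> \<Longrightarrow> p \<in> Rset n \<Longrightarrow> p \<noteq> 0 \<Longrightarrow> a \<in> lists (Xset n) \<Longrightarrow>
     c \<in> lists (Xset n) \<Longrightarrow> reduction n (red1 p a c \<circ> \<phi>)"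

definition divides_word :: "sym list \<Rightarrow> sym list \<Rightarrow> bool" where
  "divides_word w m \<longleftrightarrow> (\<exists>a c. m = a @ w @ c)"

definition overlap_amb :: "nat \<Rightarrow> 'k::field fa \<Rightarrow> 'k fa \<Rightarrow> sym list \<Rightarrow> sym list \<Rightarrow> bool" where
  "overlap_amb n g1 g2 b1 b2 \<longleftrightarrow>
     g1 \<in> Rset n \<and> g2 \<in> Rset n \<and> g1 \<noteq> 0 \<and> g2 \<noteq> 0 \<and>
     b1 \<in> lists (Xset n) \<and> b2 \<in> lists (Xset n) \<and> (b1, b2) \<noteq> ([], []) \<and>
     tip g1 @ b2 = b1 @ tip g2 \<and>
     \<not> divides_word (tip g2) b2 \<and> \<not> divides_word (tip g1) b1"

end

theory Submission
  imports Defs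
begin

lemma lookup_smul[simp]: "Poly_Mapping.lookup (smul c f) x = c * Poly_Mapping.lookup f x"
  unfolding smul_def by (simp add: Poly_Mapping.map.rep_eq when_def)

lemma smul_one[simp]: "smul 1 f = f"
  by (rule poly_mapping_eqI) simp

lemma smul_m1: "smul (-1) f = - f"
  by (rule poly_mapping_eqI) simp

lemma fmul_superset:
  assumes "finite K" "Poly_Mapping.keys f \<subseteq> K" "finite L" "Poly_Mapping.keys g \<subseteq> L"
  shows "fmul f g = (\<Sum>x\<in>K. \<Sum>y\<in>L. Poly_Mapping.single (x @ y) (Poly_Mapping.lookup f x * Poly_Mapping.lookup g y))"
proof -
  have "fmul f g = (\<Sum>x\<in>K. \<Sum>y\<in>Poly_Mapping.keys g. Poly_Mapping.single (x @ y) (Poly_Mapping.lookup f x * Poly_Mapping.lookup g y))"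
    unfolding fmul_def
    by (rule sum.mono_neutral_left) (use assms in \<open>auto simp: in_keys_iff\<close>)
  also have "\<dots> = (\<Sum>x\<in>K. \<Sum>y\<in>L. Poly_Mapping.single (x @ y) (Poly_Mapping.lookup f x * Poly_Mapping.lookup g y))"
    by (rule sum.cong[OF refl], rule sum.mono_neutral_left) (use assms in \<open>auto simp: in_keys_iff\<close>)
  finally show ?thesis .
qed

lemma fmul_add_left: "fmul (f + g) h = fmul f h + fmul g h"
proof -
  let ?K = "Poly_Mapping.keys f \<union> Poly_Mapping.keys g" and ?L = "Poly_Mapping.keys h"
  have k: "Poly_Mapping.keys (f+g) \<subseteq> ?K" by (rule keys_add)
  show ?thesis
    apply (subst fmul_superset[of ?K _ ?L], auto simp: k)[1]
    apply (subst fmul_superset[of ?K f ?L], auto)[1]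
    apply (subst fmul_superset[of ?K g ?L], auto)[1]
    by (simp add: lookup_add distrib_right single_add sum.distrib)
qed

lemma fmul_add_right: "fmul h (f + g) = fmul h f + fmul h g"
proof -
  let ?L = "Poly_Mapping.keys f \<union> Poly_Mapping.keys g" and ?K = "Poly_Mapping.keys h"
  have k: "Poly_Mapping.keys (f+g) \<subseteq> ?L" by (rule keys_add)
  show ?thesis
    apply (subst fmul_superset[of ?K _ ?L], auto simp: k)[1]
    apply (subst fmul_superset[of ?K _ ?L f], auto)[1]
    apply (subst fmul_superset[of ?K _ ?L g], auto)[1]
    by (simp add: lookup_add distrib_left single_add sum.distrib)
qed

lemma fmul_zero_left[simp]: "fmul 0 h = 0" by (simp add: fmul_def)
lemma fmul_zero_right[simp]: "fmul h 0 = 0" by (simp add: fmul_def)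

lemma fmul_diff_left: "fmul (f - g) h = fmul f h - fmul g h"
  by (metis add_diff_cancel diff_add_cancel fmul_add_left)
lemma fmul_diff_right: "fmul h (f - g) = fmul h f - fmul h g"
  by (metis add_diff_cancel diff_add_cancel fmul_add_right)

lemma fmul_sum_left: "fmul (\<Sum>s\<in>A. F s) h = (\<Sum>s\<in>A. fmul (F s) h)"
  by (induction A rule: infinite_finite_induct) (auto simp: fmul_add_left)
lemma fmul_sum_right: "fmul h (\<Sum>s\<in>A. F s) = (\<Sum>s\<in>A. fmul h (F s))"
  by (induction A rule: infinite_finite_induct) (auto simp: fmul_add_right)

lemma fmul_mon[simp]: "fmul (mon a) (mon b) = (mon (a @ b) :: 'k::field fa)"
  unfolding mon_def fmul_def by simp

lemma mon_nil_left[simp]: "fmul (mon []) f = f"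
proof -
  have "fmul (mon []) f = (\<Sum>y\<in>Poly_Mapping.keys f. Poly_Mapping.single y (Poly_Mapping.lookup f y))"
    unfolding fmul_def mon_def by simp
  also have "\<dots> = f"
    by (rule poly_mapping_eqI) (simp add: lookup_sum lookup_single when_def in_keys_iff)
  finally show ?thesis .
qed

lemma mon_nil_right[simp]: "fmul f (mon []) = f"
proof -
  have "fmul f (mon []) = (\<Sum>y\<in>Poly_Mapping.keys f. Poly_Mapping.single y (Poly_Mapping.lookup f y))"
    unfolding fmul_def mon_def by simp
  also have "\<dots> = f"
    by (rule poly_mapping_eqI) (simp add: lookup_sum lookup_single when_def in_keys_iff)
  finally show ?thesis .
qed

lemma lookup_mon: "Poly_Mapping.lookup (mon w) x = (if w = x then 1 else 0)"
  by (simp add: mon_def lookup_single when_def)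

lemma sym_less_asym: "sym_less x y \<Longrightarrow> \<not> sym_less y x"
  by (cases x; cases y) auto

lemma sym_less_irrefl: "\<not> sym_less x x"
  by (cases x) auto

lemma rr_inj: "a \<in> {1..n} \<Longrightarrow> b \<in> {1..n} \<Longrightarrow> rr n a = rr n b \<Longrightarrow> a = b"
  by (auto simp: rr_def)
lemma rr_range: "a \<in> {1..n} \<Longrightarrow> rr n a \<in> {1..n}"
  by (auto simp: rr_def)
lemma rr_rr: "a \<in> {1..n} \<Longrightarrow> rr n (rr n a) = a"
  by (auto simp: rr_def)

definition good :: "nat \<Rightarrow> smat \<Rightarrow> bool" where
  "good n w \<longleftrightarrow> (\<forall>a\<in>{1..n}. \<forall>b\<in>{1..n}. \<forall>c\<in>{1..n}. \<forall>d\<in>{1..n}. w a b = w c d \<longrightarrow> a = c \<and> b = d)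
     \<and> (\<forall>j\<in>{1..n}. \<forall>b\<in>{1..n}. b < n \<longrightarrow> sym_less (w j b) (w j n))"

lemma good_inj: "good n w \<Longrightarrow> a\<in>{1..n} \<Longrightarrow> b\<in>{1..n} \<Longrightarrow> c\<in>{1..n} \<Longrightarrow> d\<in>{1..n} \<Longrightarrow> w a b = w c d \<Longrightarrow> a = c \<and> b = d"
  unfolding good_def by blast
lemma good_max: "good n w \<Longrightarrow> j\<in>{1..n} \<Longrightarrow> b\<in>{1..n} \<Longrightarrow> b < n \<Longrightarrow> sym_less (w j b) (w j n)"
  unfolding good_def by blast

lemma lookup_sum_ind:
  assumes "inj_on F A" "finite A"
  shows "(\<Sum>s\<in>A. (if F s = m then 1 else 0)) = (if m \<in> F ` A then (1::'k::field) else 0)"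
proof (cases "m \<in> F ` A")
  case True
  then obtain s0 where s0: "s0 \<in> A" "m = F s0" by auto
  have "(\<Sum>s\<in>A. (if F s = m then (1::'k) else 0)) = (\<Sum>s\<in>A. (if s = s0 then 1 else 0))"
    by (rule sum.cong) (use assms s0 in \<open>auto simp: inj_on_def\<close>)
  also have "\<dots> = 1" using s0 assms by simp
  finally show ?thesis using True by simp
next
  case False
  then show ?thesis by (auto intro!: sum.neutral)
qed

lemma lookup_bgen:
  fixes w :: smat
  assumes g: "good n w" and j: "j \<in> {1..n}"
  shows "Poly_Mapping.lookup (bgen n w j i :: 'k::field fa) m =
     (if m \<in> (\<lambda>s. [w j (rr n s), mdag n w s (rr n i)]) ` {1..n} then 1 else 0) - (if j = i \<and> m = [] then 1 else 0)"
proof -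
  have inj: "inj_on (\<lambda>s. [w j (rr n s), mdag n w s (rr n i)]) {1..n}"
  proof (rule inj_onI)
    fix x y assume xy: "x \<in> {1..n}" "y \<in> {1..n}" "[w j (rr n x), mdag n w x (rr n i)] = [w j (rr n y), mdag n w y (rr n i)]"
    then have "rr n x = rr n y" using good_inj[OF g j rr_range[OF xy(1)] j rr_range[OF xy(2)]] by simp
    then show "x = y" using rr_inj xy by blast
  qed
  have 1: "Poly_Mapping.lookup (if j = i then mon [] else 0 :: 'k fa) m = (if j = i \<and> m = [] then 1 else 0)"
      by (simp add: lookup_mon)
  have 2: "Poly_Mapping.lookup (\<Sum>s\<in>{1..n}. mon [w j (rr n s), mdag n w s (rr n i)] :: 'k fa) m = (\<Sum>s\<in>{1..n}. (if [w j (rr n s), mdag n w s (rr n i)] = m then 1 else 0))"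
    unfolding lookup_sum lookup_mon ..
  show ?thesis unfolding bgen_def lookup_minus 1 2 lookup_sum_ind[OF inj finite_atLeastAtMost] ..
qed

lemma tip_bgen:
  fixes w :: smat
  assumes g: "good n w" and j: "j \<in> {1..n}" and n: "n \<ge> 1"
  shows "tip (bgen n w j i :: 'k::field fa) = [w j n, mdag n w 1 (rr n i)]"
    and "lcoef (bgen n w j i :: 'k::field fa) = 1"
proof -
  let ?F = "\<lambda>s. [w j (rr n s), mdag n w s (rr n i)]"
  let ?t = "[w j n, mdag n w 1 (rr n i)]"
  have rr1: "rr n 1 = n" by (simp add: rr_def)
  have tF: "?t = ?F 1" by (simp add: rr_def)
  have L: "Poly_Mapping.lookup (bgen n w j i :: 'k fa) m =
     (if m \<in> ?F ` {1..n} then 1 else 0) - (if j = i \<and> m = [] then 1 else 0)" for m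
    by (rule lookup_bgen[OF g j])
  have lt: "Poly_Mapping.lookup (bgen n w j i :: 'k fa) ?t = 1"
  proof -
    have "(1::nat) \<in> {1..n}" using n by simp
    then have "?t \<in> ?F ` {1..n}" unfolding tF by (rule imageI)
    then show ?thesis unfolding L[of ?t] by simp
  qed
  have keys: "m \<in> Poly_Mapping.keys (bgen n w j i :: 'k fa) \<Longrightarrow> m \<in> ?F ` {1..n} \<or> m = []" for m
    using L[of m] by (auto simp: in_keys_iff split: if_splits)
  have less: "mon_less m ?t" if "m \<in> Poly_Mapping.keys (bgen n w j i :: 'k fa)" "m \<noteq> ?t" for m
  proof -
    from keys[OF that(1)] show ?thesis
    proof
      assume "m \<in> ?F ` {1..n}"
      then obtain s where s: "s \<in> {1..n}" "m = ?F s" by auto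
      with that(2) tF have "s \<noteq> 1" by auto
      then have "rr n s < n" "rr n s \<in> {1..n}" using s by (auto simp: rr_def)
      then have "sym_less (w j (rr n s)) (w j n)" using good_max[OF g j] by blast
      then show ?thesis using s by (simp add: mon_less_def)
    qed (simp add: mon_less_def)
  qed
  have notless: "\<not> mon_less ?t m" if "m \<in> Poly_Mapping.keys (bgen n w j i :: 'k fa)" for m
  proof -
    from keys[OF that(1)] show ?thesis
    proof
      assume "m \<in> ?F ` {1..n}"
      then obtain s where s: "s \<in> {1..n}" "m = ?F s" by auto
      show ?thesis
      proof (cases "s = 1")
        case True then show ?thesis using s tF sym_less_irrefl by (auto simp: mon_less_def)
      next
        case False
        then have "rr n s < n" "rr n s \<in> {1..n}" using s by (auto simp: rr_def)
        then have "sym_less (w j (rr n s)) (w j n)" using good_max[OF g j] by blast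
        then have "\<not> sym_less (w j n) (w j (rr n s))" "w j n \<noteq> w j (rr n s)" using sym_less_asym sym_less_irrefl by metis+
        then show ?thesis using s by (simp add: mon_less_def)
      qed
    qed (simp add: mon_less_def)
  qed
  have tk: "?t \<in> Poly_Mapping.keys (bgen n w j i :: 'k fa)" using lt by (simp add: in_keys_iff)
  show t: "tip (bgen n w j i :: 'k fa) = ?t"
    unfolding tip_def
  proof (rule the_equality)
    show "?t \<in> Poly_Mapping.keys (bgen n w j i :: 'k fa) \<and> (\<forall>m'\<in>Poly_Mapping.keys (bgen n w j i :: 'k fa). m' = ?t \<or> mon_less m' ?t)"
      using tk less by blast
  next
    fix m assume m: "m \<in> Poly_Mapping.keys (bgen n w j i :: 'k fa) \<and> (\<forall>m'\<in>Poly_Mapping.keys (bgen n w j i :: 'k fa). m' = m \<or> mon_less m' m)"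
    then have "?t = m \<or> mon_less ?t m" using tk by blast
    then show "m = ?t" using notless m by blast
  qed
  show "lcoef (bgen n w j i :: 'k fa) = 1" unfolding lcoef_def t by (rule lt)
qed

lemma bgen_ne0:
  assumes g: "good n w" and j: "j \<in> {1..n}" and n: "n \<ge> 1"
  shows "(bgen n w j i :: 'k::field fa) \<noteq> 0"
proof
  assume "(bgen n w j i :: 'k::field fa) = 0"
  then have "lcoef (bgen n w j i :: 'k::field fa) = 0" unfolding lcoef_def by simp
  moreover have "lcoef (bgen n w j i :: 'k::field fa) = 1" by (rule tip_bgen(2)[OF assms])
  ultimately show False by simp
qed

lemma sstar_sstar[simp]: "sstar (sstar x) = x" by (cases x) auto

lemma dagdag: "a \<in> {1..n} \<Longrightarrow> b \<in> {1..n} \<Longrightarrow> mdag n (mdag n v) a b = v a b"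
  by (simp add: mdag_def rr_rr)

lemma M_cases: "v \<in> Mset n \<Longrightarrow> v = umat \<or> v = mtr umat \<or> v = mstar n umat \<or> v = mdag n umat"
  by (auto simp: Mset_def)

lemma good_u: "good n umat" by (auto simp: good_def umat_def)
lemma good_ut: "good n (mtr umat)" by (auto simp: good_def umat_def mtr_def)
lemma good_us: "good n (mstar n umat)"
  unfolding good_def
proof (rule conjI; intro ballI impI)
  fix a b c d assume r: "a \<in> {1..n}" "b \<in> {1..n}" "c \<in> {1..n}" "d \<in> {1..n}" and q: "mstar n umat a b = mstar n umat c d"
  then have "rr n a = rr n c" "rr n b = rr n d" by (auto simp: mstar_def umat_def)
  then show "a = c \<and> b = d" using rr_inj r by blast
next
  fix j b assume r: "j \<in> {1..n}" "b \<in> {1..n}" "b < n"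
  then show "sym_less (mstar n umat j b) (mstar n umat j n)" by (simp add: mstar_def umat_def rr_def)
qed
lemma good_ud: "good n (mdag n umat)"
  unfolding good_def
proof (rule conjI; intro ballI impI)
  fix a b c d assume r: "a \<in> {1..n}" "b \<in> {1..n}" "c \<in> {1..n}" "d \<in> {1..n}" and q: "mdag n umat a b = mdag n umat c d"
  then have "rr n a = rr n c" "rr n b = rr n d" by (auto simp: mdag_def umat_def)
  then show "a = c \<and> b = d" using rr_inj r by blast
next
  fix j b assume r: "j \<in> {1..n}" "b \<in> {1..n}" "b < n"
  then show "sym_less (mdag n umat j b) (mdag n umat j n)" by (simp add: mdag_def umat_def rr_def)
qed

lemma good_cong: "good n w \<Longrightarrow> (\<forall>a\<in>{1..n}. \<forall>b\<in>{1..n}. w a b = w' a b) \<Longrightarrow> good n w'"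
proof -
  assume g: "good n w" and e: "\<forall>a\<in>{1..n}. \<forall>b\<in>{1..n}. w a b = w' a b"
  show "good n w'" unfolding good_def
  proof (rule conjI; intro ballI impI)
    fix a b c d assume r: "a \<in> {1..n}" "b \<in> {1..n}" "c \<in> {1..n}" "d \<in> {1..n}" and q: "w' a b = w' c d"
    have "w a b = w c d" using q e r by simp
    then show "a = c \<and> b = d" using good_inj[OF g r] by blast
  next
    fix j b assume r: "j \<in> {1..n}" "b \<in> {1..n}" "b < n"
    have "n \<in> {1..n}" using r by simp
    then have "w j b = w' j b" "w j n = w' j n" using e r by auto
    then show "sym_less (w' j b) (w' j n)" using good_max[OF g r] by simp
  qed
qed

lemma M_good: "v \<in> Mset n \<Longrightarrow> good n v"
  using M_cases[of v n] good_u good_ut good_us good_ud by auto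

lemma M_dag_in: "v \<in> Mset n \<Longrightarrow> \<exists>v'\<in>Mset n. \<forall>a\<in>{1..n}. \<forall>b\<in>{1..n}. mdag n v a b = v' a b"
proof -
  assume v: "v \<in> Mset n"
  have "mdag n umat \<in> Mset n" "mtr umat \<in> Mset n" "mstar n umat \<in> Mset n" "umat \<in> Mset n"
    by (auto simp: Mset_def)
  moreover have "\<forall>a\<in>{1..n}. \<forall>b\<in>{1..n}. mdag n (mtr umat) a b = mstar n umat a b"
    by (simp add: mdag_def mtr_def mstar_def umat_def)
  moreover have "\<forall>a\<in>{1..n}. \<forall>b\<in>{1..n}. mdag n (mstar n umat) a b = mtr umat a b"
    by (simp add: mdag_def mtr_def mstar_def umat_def rr_rr)
  moreover have "\<forall>a\<in>{1..n}. \<forall>b\<in>{1..n}. mdag n (mdag n umat) a b = umat a b"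
    by (simp add: dagdag)
  ultimately show ?thesis using M_cases[OF v] by blast
qed

lemma M_dag_good: "v \<in> Mset n \<Longrightarrow> good n (mdag n v)"
proof -
  assume "v \<in> Mset n"
  then obtain v' where "v' \<in> Mset n" "\<forall>a\<in>{1..n}. \<forall>b\<in>{1..n}. mdag n v a b = v' a b" using M_dag_in by blast
  then show ?thesis using M_good good_cong[of n v' "mdag n v"] by auto
qed

lemma M_X: "v \<in> Mset n \<Longrightarrow> a \<in> {1..n} \<Longrightarrow> b \<in> {1..n} \<Longrightarrow> v a b \<in> Xset n"
  by (auto simp: Mset_def Xset_def umat_def mtr_def mstar_def mdag_def rr_def)

lemma M_dag_X: "v \<in> Mset n \<Longrightarrow> a \<in> {1..n} \<Longrightarrow> b \<in> {1..n} \<Longrightarrow> mdag n v a b \<in> Xset n"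
proof -
  assume a: "v \<in> Mset n" "a \<in> {1..n}" "b \<in> {1..n}"
  then obtain v' where "v' \<in> Mset n" "\<forall>a\<in>{1..n}. \<forall>b\<in>{1..n}. mdag n v a b = v' a b" using M_dag_in by blast
  then show ?thesis using M_X[of v' n a b] a by auto
qed

lemma bgen_cong:
  assumes "\<forall>a\<in>{1..n}. \<forall>b\<in>{1..n}. w a b = w' a b" "j \<in> {1..n}" "i \<in> {1..n}"
  shows "(bgen n w j i :: 'k::field fa) = bgen n w' j i"
proof -
  have "w j (rr n s) = w' j (rr n s) \<and> mdag n w s (rr n i) = mdag n w' s (rr n i)" if s: "s \<in> {1..n}" for s
    using assms rr_range[OF s] by (simp add: mdag_def rr_rr)
  then have "(\<Sum>s\<in>{1..n}. mon [w j (rr n s), mdag n w s (rr n i)]) = (\<Sum>s\<in>{1..n}. mon [w' j (rr n s), mdag n w' s (rr n i)] :: 'k fa)"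
    by (intro sum.cong) auto
  then show ?thesis unfolding bgen_def by simp
qed

lemma overlap_cases:
  assumes v: "v \<in> Mset n" and w: "w \<in> Mset n" and i: "i' \<in> {1..n}" and j: "j2 \<in> {1..n}"
    and n: "n \<ge> 2" and eq: "mdag n w 1 (rr n i') = v j2 n"
  shows "i' = 1 \<and> j2 = 1 \<and> (\<forall>a\<in>{1..n}. \<forall>b\<in>{1..n}. w a b = mdag n v a b)"
proof -
  have r1: "rr n 1 = n" "rr n n = 1" using n by (auto simp: rr_def)
  have ij: "i' = 1 \<and> j2 = 1 \<and> (v = mdag n umat \<and> w = umat \<or> v = mstar n umat \<and> w = mtr umat
     \<or> v = mtr umat \<and> w = mstar n umat \<or> v = umat \<and> w = mdag n umat)"
    using M_cases[OF v] M_cases[OF w] eq i j n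
    by (elim disjE) (simp_all add: umat_def mtr_def mstar_def mdag_def rr_def, linarith+)
  then show ?thesis
    by (auto simp: dagdag simp del: One_nat_def) (auto simp: umat_def mtr_def mstar_def mdag_def rr_rr)
qed

lemma red_list:
  fixes f :: "'k::field fa" and p :: "nat \<Rightarrow> 'k fa" and a c :: "nat \<Rightarrow> sym list"
  assumes "distinct xs"
   and "\<forall>s\<in>set xs. p s \<in> Rset n \<and> p s \<noteq> 0 \<and> lcoef (p s) = 1 \<and> a s \<in> lists (Xset n) \<and> c s \<in> lists (Xset n)
          \<and> Poly_Mapping.lookup f (a s @ tip (p s) @ c s) = -1"
   and "\<forall>s\<in>set xs. \<forall>s'\<in>set xs. s' \<noteq> s \<longrightarrow>
          Poly_Mapping.lookup (fmul (fmul (mon (a s')) (p s')) (mon (c s'))) (a s @ tip (p s) @ c s) = 0"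
  shows "\<exists>\<phi>. reduction n \<phi> \<and> \<phi> f = f + (\<Sum>s\<in>set xs. fmul (fmul (mon (a s)) (p s)) (mon (c s)))"
  using assms
proof (induction xs)
  case Nil
  have "reduction n (\<lambda>x::'k fa. x)" using red_id[of n] unfolding id_def .
  then show ?case by (intro exI[of _ "\<lambda>x. x"]) simp
next
  case (Cons x xs)
  let ?q = "\<lambda>s. fmul (fmul (mon (a s)) (p s)) (mon (c s))"
  from Cons obtain \<phi> where phi: "reduction n \<phi>" "\<phi> f = f + (\<Sum>s\<in>set xs. ?q s)" by auto
  have x: "p x \<in> Rset n" "p x \<noteq> 0" "lcoef (p x) = 1" "a x \<in> lists (Xset n)" "c x \<in> lists (Xset n)"
     "Poly_Mapping.lookup f (a x @ tip (p x) @ c x) = -1" using Cons.prems by auto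
  have nx: "x \<notin> set xs" using Cons.prems by auto
  have z: "Poly_Mapping.lookup (?q s) (a x @ tip (p x) @ c x) = 0" if "s \<in> set xs" for s
    using Cons.prems(3) that nx by auto
  have lk: "Poly_Mapping.lookup (f + (\<Sum>s\<in>set xs. ?q s)) (a x @ tip (p x) @ c x) = -1"
    by (simp add: lookup_add lookup_sum z x(6))
  have "(red1 (p x) (a x) (c x) \<circ> \<phi>) f = f + (\<Sum>s\<in>set xs. ?q s) + ?q x"
    unfolding comp_def phi(2) red1_def lk x(3) by (simp add: smul_m1)
  also have "\<dots> = f + (\<Sum>s\<in>set (x # xs). ?q s)" using nx by (simp add: add.commute add.left_commute)
  finally show ?case using red_step[OF phi(1) x(1) x(2) x(4) x(5)] by blast
qed

lemma fmul_mon_bgen: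
  "fmul (mon a) (bgen n w j i :: 'k::field fa) =
    (\<Sum>s\<in>{1..n}. mon (a @ [w j (rr n s), mdag n w s (rr n i)])) - (if j = i then mon a else 0)"
  unfolding bgen_def fmul_diff_right fmul_sum_right by (simp add: if_distrib[of "fmul (mon a)"])

lemma fmul_bgen_mon:
  "fmul (bgen n w j i :: 'k::field fa) (mon c) =
    (\<Sum>s\<in>{1..n}. mon ([w j (rr n s), mdag n w s (rr n i)] @ c)) - (if j = i then mon c else 0)"
  unfolding bgen_def fmul_diff_left fmul_sum_left by (simp add: if_distrib[of "\<lambda>x. fmul x (mon c)"])

lemma lookup_sum_mon:
  "Poly_Mapping.lookup (\<Sum>s\<in>A. mon (W s) :: 'k::field fa) T = (\<Sum>s\<in>A. if W s = T then 1 else 0)"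
  unfolding lookup_sum lookup_mon ..

lemma lookup_sum_mon0:
  "\<forall>s\<in>A. W s \<noteq> T \<Longrightarrow> Poly_Mapping.lookup (\<Sum>s\<in>A. mon (W s) :: 'k::field fa) T = 0"
  unfolding lookup_sum_mon by (rule sum.neutral) auto

lemma lookup_sum_mon1:
  "inj_on W A \<Longrightarrow> finite A \<Longrightarrow> s0 \<in> A \<Longrightarrow> Poly_Mapping.lookup (\<Sum>s\<in>A. mon (W s) :: 'k::field fa) (W s0) = 1"
  unfolding lookup_sum_mon by (subst lookup_sum_ind) auto

lemma lookup_if_mon:
  "length w \<noteq> length T \<Longrightarrow> Poly_Mapping.lookup (if P then mon w else 0 :: 'k::field fa) T = 0"
  by (auto simp: lookup_mon)

lemma resolve:
  fixes v :: smat
  assumes v: "v \<in> Mset n" and l: "l \<in> {1..n}" and i: "i \<in> {1..n}" and n: "n \<ge> 2"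
  shows "\<exists>\<phi>1 \<phi>2. reduction n \<phi>1 \<and> reduction n \<phi>2 \<and>
     \<phi>1 (fmul (mon (tip (bgen n (mdag n v) l 1 :: 'k::field fa)) - smul (1 / lcoef (bgen n (mdag n v) l 1 :: 'k fa)) (bgen n (mdag n v) l 1)) (mon [mdag n v 1 (rr n i)]))
     = \<phi>2 (fmul (mon [mdag n v l n]) (mon (tip (bgen n v 1 i :: 'k fa)) - smul (1 / lcoef (bgen n v 1 i :: 'k fa)) (bgen n v 1 i)))"
proof -
  define D where "D = mdag n v"
  have gD: "good n D" unfolding D_def by (rule M_dag_good[OF v])
  have gv: "good n v" by (rule M_good[OF v])
  have n1: "1 \<in> {1..n}" and nn: "n \<in> {1..n}" using n by auto
  have r1: "rr n 1 = n" by (simp add: rr_def)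
  have DD: "mdag n D a b = v a b" if "a \<in> {1..n}" "b \<in> {1..n}" for a b
    unfolding D_def using that by (rule dagdag)
  have n1': "n \<ge> 1" using n by simp
  let ?g1 = "bgen n D l 1 :: 'k fa" and ?g2 = "bgen n v 1 i :: 'k fa"
  let ?b1 = "[D l n]" and ?b2 = "[D 1 (rr n i)]"
  let ?W = "[D l n, v 1 n, D 1 (rr n i)]"
  have e1: "mdag n D 1 (rr n 1) = v 1 n" by (simp only: r1 DD[OF n1 nn])
  have t1: "tip ?g1 = [D l n, v 1 n]" using tip_bgen(1)[OF gD l n1', of 1] unfolding e1 .
  have t2: "tip ?g2 = [v 1 n, D 1 (rr n i)]" using tip_bgen(1)[OF gv n1 n1', of i] unfolding D_def .
  have lc1: "lcoef ?g1 = 1" by (rule tip_bgen(2)[OF gD l n1'])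
  have lc2: "lcoef ?g2 = 1" by (rule tip_bgen(2)[OF gv n1 n1'])
  have F1: "fmul (mon (tip ?g1) - smul (1 / lcoef ?g1) ?g1) (mon ?b2) = mon ?W - fmul ?g1 (mon ?b2)"
    unfolding t1 lc1 by (simp add: fmul_diff_left)
  have F2: "fmul (mon ?b1) (mon (tip ?g2) - smul (1 / lcoef ?g2) ?g2) = mon ?W - fmul (mon ?b1) ?g2"
    unfolding t2 lc2 by (simp add: fmul_diff_right)
  have rrs: "rr n s \<in> {1..n}" "rr n s \<noteq> n" if "s \<in> {2..n}" for s
    using that by (auto simp: rr_def)
  have inr: "s \<in> {1..n}" if "s \<in> {2..n}" for s using that by auto
  have Dne: "D l (rr n s) \<noteq> D l (rr n s')" if "s \<in> {1..n}" "s' \<in> {1..n}" "s \<noteq> s'" for s s'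
    using good_inj[OF gD l rr_range[OF that(1)] l rr_range[OF that(2)]] rr_inj that by blast
  have vne: "v 1 (rr n s) \<noteq> v 1 (rr n s')" if "s \<in> {1..n}" "s' \<in> {1..n}" "s \<noteq> s'" for s s'
    using good_inj[OF gv n1 rr_range[OF that(1)] n1 rr_range[OF that(2)]] rr_inj that by blast
  have Dne2: "D s (rr n i) \<noteq> D s' (rr n i)" if "s \<in> {1..n}" "s' \<in> {1..n}" "s \<noteq> s'" for s s'
    using good_inj[OF gD that(1) rr_range[OF i] that(2) rr_range[OF i]] that by blast
  have R1: "bgen n v s i \<in> Rset n" if "s \<in> {1..n}" for s
    unfolding Rset_def using v that i by blast
  have T1: "tip (bgen n v s i :: 'k fa) = [v s n, D 1 (rr n i)]" if "s \<in> {1..n}" for s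
    using tip_bgen(1)[OF gv that n1', of i] unfolding D_def .
  have G1: "fmul ?g1 (mon ?b2) = (\<Sum>t\<in>{1..n}. mon ([D l (rr n t), mdag n D t (rr n 1)] @ ?b2)) - (if l = 1 then mon ?b2 else 0)"
    by (rule fmul_bgen_mon)
  have L1: "Poly_Mapping.lookup (mon ?W - fmul ?g1 (mon ?b2)) ([D l (rr n s)] @ tip (bgen n v s i :: 'k fa) @ []) = -1"
    if s: "s \<in> {2..n}" for s
  proof -
    have e: "[D l (rr n s)] @ tip (bgen n v s i :: 'k fa) @ [] = [D l (rr n s), mdag n D s (rr n 1)] @ ?b2"
      unfolding T1[OF inr[OF s]] r1 DD[OF inr[OF s] nn] by simp
    have w: "?W \<noteq> [D l (rr n s), mdag n D s (rr n 1)] @ ?b2"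
      using Dne[OF n1 inr[OF s]] s r1 by auto
    have inj: "inj_on (\<lambda>t. [D l (rr n t), mdag n D t (rr n 1)] @ ?b2) {1..n}"
      by (rule inj_onI) (use Dne in fastforce)
    show ?thesis unfolding e lookup_minus G1 lookup_mon
      using w lookup_sum_mon1[OF inj finite_atLeastAtMost inr[OF s], where 'k='k]
        lookup_if_mon[of ?b2 "[D l (rr n s), mdag n D s (rr n 1)] @ ?b2" "l = 1", where 'k='k]
      by simp
  qed
  have C1: "Poly_Mapping.lookup (fmul (fmul (mon [D l (rr n s')]) (bgen n v s' i :: 'k fa)) (mon []))
      ([D l (rr n s)] @ tip (bgen n v s i :: 'k fa) @ []) = 0"
    if s: "s \<in> {2..n}" and s': "s' \<in> {2..n}" and ne: "s' \<noteq> s" for s s'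
  proof -
    have d: "D l (rr n s') \<noteq> D l (rr n s)" using Dne[OF inr[OF s'] inr[OF s] ne] .
    show ?thesis unfolding mon_nil_right fmul_mon_bgen lookup_minus T1[OF inr[OF s]]
      using lookup_sum_mon0[of "{1..n}" "\<lambda>t. [D l (rr n s')] @ [v s' (rr n t), mdag n v t (rr n i)]"
          "[D l (rr n s)] @ [v s n, D 1 (rr n i)] @ []", where 'k='k] d
        lookup_if_mon[of "[D l (rr n s')]" "[D l (rr n s)] @ [v s n, D 1 (rr n i)] @ []" "s' = i", where 'k='k]
      by simp
  qed
  have X1: "[D l (rr n s)] \<in> lists (Xset n)" if "s \<in> {1..n}" for s
    using M_dag_X[OF v l rr_range[OF that]] unfolding D_def by simp
  obtain \<phi>1 where phi1: "reduction n \<phi>1" "\<phi>1 (mon ?W - fmul ?g1 (mon ?b2)) = (mon ?W - fmul ?g1 (mon ?b2))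
     + (\<Sum>s\<in>set [2..<n+1]. fmul (fmul (mon [D l (rr n s)]) (bgen n v s i)) (mon []))"
  proof -
    have "\<exists>\<phi>. reduction n \<phi> \<and> \<phi> (mon ?W - fmul ?g1 (mon ?b2)) = (mon ?W - fmul ?g1 (mon ?b2))
     + (\<Sum>s\<in>set [2..<n+1]. fmul (fmul (mon [D l (rr n s)]) (bgen n v s i)) (mon []))"
      apply (rule red_list[where p="\<lambda>s. bgen n v s i" and a="\<lambda>s. [D l (rr n s)]" and c="\<lambda>s. []"])
      subgoal by simp
      subgoal
      proof (intro ballI conjI)
        fix s assume "s \<in> set [2..<n+1]"
        then have s: "s \<in> {2..n}" by auto
        show "bgen n v s i \<in> Rset n" by (rule R1[OF inr[OF s]])
        show "(bgen n v s i :: 'k fa) \<noteq> 0" by (rule bgen_ne0[OF gv inr[OF s] n1'])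
        show "lcoef (bgen n v s i :: 'k fa) = 1" by (rule tip_bgen(2)[OF gv inr[OF s] n1'])
        show "[D l (rr n s)] \<in> lists (Xset n)" by (rule X1[OF inr[OF s]])
        show "[] \<in> lists (Xset n)" by simp
        show "Poly_Mapping.lookup (mon ?W - fmul ?g1 (mon ?b2)) ([D l (rr n s)] @ tip (bgen n v s i :: 'k fa) @ []) = -1"
          by (rule L1[OF s])
      qed
      subgoal using C1 by auto
      done
    then show ?thesis using that by blast
  qed
  obtain v' where v': "v' \<in> Mset n" "\<forall>a\<in>{1..n}. \<forall>b\<in>{1..n}. D a b = v' a b"
    using M_dag_in[OF v] unfolding D_def by blast
  have R2: "(bgen n D l s :: 'k fa) \<in> Rset n" if "s \<in> {1..n}" for s
  proof -
    have "(bgen n D l s :: 'k fa) = bgen n v' l s" by (rule bgen_cong[OF v'(2) l that])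
    moreover have "(bgen n v' l s :: 'k fa) \<in> Rset n" unfolding Rset_def using v'(1) l that by blast
    ultimately show ?thesis by simp
  qed
  have T2: "tip (bgen n D l s :: 'k fa) = [D l n, v 1 (rr n s)]" if "s \<in> {1..n}" for s
    using tip_bgen(1)[OF gD l n1', of s] unfolding DD[OF n1 rr_range[OF that]] .
  have G2: "fmul (mon ?b1) ?g2 = (\<Sum>t\<in>{1..n}. mon (?b1 @ [v 1 (rr n t), D t (rr n i)])) - (if 1 = i then mon ?b1 else 0)"
    unfolding D_def by (rule fmul_mon_bgen)
  have L2: "Poly_Mapping.lookup (mon ?W - fmul (mon ?b1) ?g2) ([] @ tip (bgen n D l s :: 'k fa) @ [D s (rr n i)]) = -1"
    if s: "s \<in> {2..n}" for s
  proof -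
    have e: "[] @ tip (bgen n D l s :: 'k fa) @ [D s (rr n i)] = ?b1 @ [v 1 (rr n s), D s (rr n i)]"
      unfolding T2[OF inr[OF s]] by simp
    have w: "?W \<noteq> ?b1 @ [v 1 (rr n s), D s (rr n i)]"
      using vne[OF n1 inr[OF s]] s r1 by auto
    have inj: "inj_on (\<lambda>t. ?b1 @ [v 1 (rr n t), D t (rr n i)]) {1..n}"
      by (rule inj_onI) (use vne in fastforce)
    show ?thesis unfolding e lookup_minus G2 lookup_mon
      using w lookup_sum_mon1[OF inj finite_atLeastAtMost inr[OF s], where 'k='k]
        lookup_if_mon[of ?b1 "?b1 @ [v 1 (rr n s), D s (rr n i)]" "1 = i", where 'k='k]
      by simp
  qed
  have C2: "Poly_Mapping.lookup (fmul (fmul (mon []) (bgen n D l s' :: 'k fa)) (mon [D s' (rr n i)]))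
      ([] @ tip (bgen n D l s :: 'k fa) @ [D s (rr n i)]) = 0"
    if s: "s \<in> {2..n}" and s': "s' \<in> {2..n}" and ne: "s' \<noteq> s" for s s'
  proof -
    have d: "D s' (rr n i) \<noteq> D s (rr n i)" using Dne2[OF inr[OF s'] inr[OF s] ne] .
    show ?thesis unfolding mon_nil_left fmul_bgen_mon lookup_minus T2[OF inr[OF s]]
      using lookup_sum_mon0[of "{1..n}" "\<lambda>t. [D l (rr n t), mdag n D t (rr n s')] @ [D s' (rr n i)]"
          "[] @ [D l n, v 1 (rr n s)] @ [D s (rr n i)]", where 'k='k] d
        lookup_if_mon[of "[D s' (rr n i)]" "[] @ [D l n, v 1 (rr n s)] @ [D s (rr n i)]" "l = s'", where 'k='k]
      by simp
  qed
  have X2: "[D s (rr n i)] \<in> lists (Xset n)" if "s \<in> {1..n}" for s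
    using M_dag_X[OF v that rr_range[OF i]] unfolding D_def by simp
  obtain \<phi>2 where phi2: "reduction n \<phi>2" "\<phi>2 (mon ?W - fmul (mon ?b1) ?g2) = (mon ?W - fmul (mon ?b1) ?g2)
     + (\<Sum>s\<in>set [2..<n+1]. fmul (fmul (mon []) (bgen n D l s)) (mon [D s (rr n i)]))"
  proof -
    have "\<exists>\<phi>. reduction n \<phi> \<and> \<phi> (mon ?W - fmul (mon ?b1) ?g2) = (mon ?W - fmul (mon ?b1) ?g2)
     + (\<Sum>s\<in>set [2..<n+1]. fmul (fmul (mon []) (bgen n D l s)) (mon [D s (rr n i)]))"
      apply (rule red_list[where p="\<lambda>s. bgen n D l s" and a="\<lambda>s. []" and c="\<lambda>s. [D s (rr n i)]"])
      subgoal by simp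
      subgoal
      proof (intro ballI conjI)
        fix s assume "s \<in> set [2..<n+1]"
        then have s: "s \<in> {2..n}" by auto
        show "(bgen n D l s :: 'k fa) \<in> Rset n" by (rule R2[OF inr[OF s]])
        show "(bgen n D l s :: 'k fa) \<noteq> 0" by (rule bgen_ne0[OF gD l n1'])
        show "lcoef (bgen n D l s :: 'k fa) = 1" by (rule tip_bgen(2)[OF gD l n1'])
        show "[D s (rr n i)] \<in> lists (Xset n)" by (rule X2[OF inr[OF s]])
        show "[] \<in> lists (Xset n)" by simp
        show "Poly_Mapping.lookup (mon ?W - fmul (mon ?b1) ?g2) ([] @ tip (bgen n D l s :: 'k fa) @ [D s (rr n i)]) = -1"
          by (rule L2[OF s])
      qed
      subgoal using C2 by auto
      done
    then show ?thesis using that by blast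
  qed
  let ?q1 = "\<lambda>s. fmul (fmul (mon [D l (rr n s)]) (bgen n v s i :: 'k fa)) (mon [])"
  let ?q2 = "\<lambda>s. fmul (fmul (mon []) (bgen n D l s :: 'k fa)) (mon [D s (rr n i)])"
  have Q1: "?q1 s = (\<Sum>t\<in>{1..n}. mon [D l (rr n s), v s (rr n t), D t (rr n i)]) - (if s = i then mon [D l (rr n s)] else 0)" for s
    unfolding mon_nil_right fmul_mon_bgen D_def by simp
  have Q2: "?q2 s = (\<Sum>t\<in>{1..n}. mon [D l (rr n t), mdag n D t (rr n s), D s (rr n i)]) - (if l = s then mon [D s (rr n i)] else 0)" for s
    unfolding mon_nil_left fmul_bgen_mon by simp
  have dbl: "(\<Sum>s\<in>{1..n}. \<Sum>t\<in>{1..n}. mon [D l (rr n s), v s (rr n t), D t (rr n i)] :: 'k fa)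
     = (\<Sum>s\<in>{1..n}. \<Sum>t\<in>{1..n}. mon [D l (rr n t), mdag n D t (rr n s), D s (rr n i)])"
  proof -
    have "(\<Sum>s\<in>{1..n}. \<Sum>t\<in>{1..n}. mon [D l (rr n t), mdag n D t (rr n s), D s (rr n i)] :: 'k fa)
       = (\<Sum>s\<in>{1..n}. \<Sum>t\<in>{1..n}. mon [D l (rr n t), v t (rr n s), D s (rr n i)])"
    proof (intro sum.cong refl)
      fix s t assume st: "s \<in> {1..n}" "t \<in> {1..n}"
      show "mon [D l (rr n t), mdag n D t (rr n s), D s (rr n i)] = (mon [D l (rr n t), v t (rr n s), D s (rr n i)] :: 'k fa)"
        by (simp only: DD[OF st(2) rr_range[OF st(1)]])
    qed
    also have "\<dots> = (\<Sum>t\<in>{1..n}. \<Sum>s\<in>{1..n}. mon [D l (rr n t), v t (rr n s), D s (rr n i)])"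
      by (rule sum.swap)
    finally show ?thesis by simp
  qed
  have sg1: "(\<Sum>s\<in>{1..n}. (if s = i then mon [D l (rr n s)] else 0) :: 'k fa) = mon [D l (rr n i)]"
    using i by (simp add: sum.delta)
  have sg2: "(\<Sum>s\<in>{1..n}. (if l = s then mon [D s (rr n i)] else 0) :: 'k fa) = mon [D l (rr n i)]"
    using l by (simp add: sum.delta')
  have Z: "(\<Sum>s\<in>{1..n}. ?q1 s) = (\<Sum>s\<in>{1..n}. ?q2 s)"
    unfolding Q1 Q2 sum_subtractf dbl sg1 sg2 ..
  have st: "set [2..<n+1] = {2..n}" by auto
  have ins: "{1..n} = insert 1 {2..n}" using n by auto
  have q11: "?q1 1 = fmul (mon ?b1) ?g2" unfolding r1 mon_nil_right ..
  have q21: "?q2 1 = fmul ?g1 (mon ?b2)" unfolding mon_nil_left ..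
  have Z': "fmul (mon ?b1) ?g2 + (\<Sum>s\<in>{2..n}. ?q1 s) = fmul ?g1 (mon ?b2) + (\<Sum>s\<in>{2..n}. ?q2 s)"
  proof -
    have r1': "rr n (Suc 0) = n" by (simp add: rr_def)
    show ?thesis using Z unfolding ins by (simp add: q11 q21 r1')
  qed
  have fin: "\<phi>1 (mon ?W - fmul ?g1 (mon ?b2)) = \<phi>2 (mon ?W - fmul (mon ?b1) ?g2)"
    unfolding phi1(2) phi2(2) st using Z' by (simp add: algebra_simps)
  show ?thesis
    apply (rule exI[of _ \<phi>1], rule exI[of _ \<phi>2])
    using phi1(1) phi2(1) fin F1 F2 unfolding D_def by simp
qed

lemma word_overlap:
  assumes "[x, y] @ b2 = b1 @ [z, t]" "(b1, b2) \<noteq> ([], [])" "\<not> divides_word [x, y] b1"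
  shows "b1 = [x] \<and> b2 = [t] \<and> y = z"
proof (cases b1)
  case Nil
  then show ?thesis using assms by (cases b2) auto
next
  case (Cons a r)
  show ?thesis
  proof (cases r)
    case Nil
    then show ?thesis using assms Cons by auto
  next
    case (Cons b r')
    have "b1 = [] @ [x, y] @ r'" using assms(1) \<open>b1 = a # r\<close> Cons by auto
    then show ?thesis using assms(3) unfolding divides_word_def by blast
  qed
qed

theorem lemma3p6:
  fixes n :: nat and g1 g2 :: "'k::field fa" and b1 b2 :: "sym list"
  assumes "n \<ge> 2"
    and "overlap_amb n g1 g2 b1 b2"
  shows "(\<exists>v\<in>Mset n. \<exists>l\<in>{1..n}. \<exists>i\<in>{1..n}.
            g1 = bgen n (mdag n v) l 1 \<and> g2 = bgen n v 1 i \<and>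
            b1 = [mdag n v l n] \<and> b2 = [mdag n v 1 (rr n i)])
       \<and> (\<exists>\<phi>1 \<phi>2. reduction n \<phi>1 \<and> reduction n \<phi>2 \<and>
            \<phi>1 (fmul (mon (tip g1) - smul (1 / lcoef g1) g1) (mon b2))
              = \<phi>2 (fmul (mon b1) (mon (tip g2) - smul (1 / lcoef g2) g2)))"
proof -
  note ov = assms(2)[unfolded overlap_amb_def]
  have n1': "n \<ge> 1" using assms(1) by simp
  obtain w j i' where w: "w \<in> Mset n" "j \<in> {1..n}" "i' \<in> {1..n}" "g1 = bgen n w j i'"
    using ov unfolding Rset_def by blast
  obtain v j2 i where v: "v \<in> Mset n" "j2 \<in> {1..n}" "i \<in> {1..n}" "g2 = bgen n v j2 i"
    using ov unfolding Rset_def by blast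
  have t1: "tip g1 = [w j n, mdag n w 1 (rr n i')]" using tip_bgen(1)[OF M_good[OF w(1)] w(2) n1'] w(4) by simp
  have t2: "tip g2 = [v j2 n, mdag n v 1 (rr n i)]" using tip_bgen(1)[OF M_good[OF v(1)] v(2) n1'] v(4) by simp
  have wo: "b1 = [w j n] \<and> b2 = [mdag n v 1 (rr n i)] \<and> mdag n w 1 (rr n i') = v j2 n"
    by (rule word_overlap) (use ov t1 t2 in auto)
  have oc: "i' = 1 \<and> j2 = 1 \<and> (\<forall>a\<in>{1..n}. \<forall>b\<in>{1..n}. w a b = mdag n v a b)"
    by (rule overlap_cases[OF v(1) w(1) w(3) v(2) assms(1)]) (use wo in simp)
  have nn: "n \<in> {1..n}" using assms(1) by simp
  have g1e: "g1 = bgen n (mdag n v) j 1" using w(4) oc bgen_cong[of n w "mdag n v" j 1] w(2) n1' by auto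
  have g2e: "g2 = bgen n v 1 i" using v(4) oc by simp
  have b1e: "b1 = [mdag n v j n]" using wo oc w(2) nn by auto
  have b2e: "b2 = [mdag n v 1 (rr n i)]" using wo by simp
  show ?thesis
  proof
    show "\<exists>v\<in>Mset n. \<exists>l\<in>{1..n}. \<exists>i\<in>{1..n}.
            g1 = bgen n (mdag n v) l 1 \<and> g2 = bgen n v 1 i \<and>
            b1 = [mdag n v l n] \<and> b2 = [mdag n v 1 (rr n i)]"
      using v(1) w(2) v(3) g1e g2e b1e b2e by blast
    show "\<exists>\<phi>1 \<phi>2. reduction n \<phi>1 \<and> reduction n \<phi>2 \<and>
            \<phi>1 (fmul (mon (tip g1) - smul (1 / lcoef g1) g1) (mon b2))
              = \<phi>2 (fmul (mon b1) (mon (tip g2) - smul (1 / lcoef g2) g2))"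
      unfolding g1e g2e b1e b2e by (rule resolve[OF v(1) w(2) v(3) assms(1)])
  qed
qed

end
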